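(* The values of $h$ satisfy $(h(1),h(2),\dots,h(8))=(0,1,1,1,2,2,1,1)$, and for every integer $n>8$: $h(n)=h(n/2)$ if $n\equiv0\pmod 4$; $h(n)=h(n/2)+1$ if $n\equiv 2\pmod 4$; $h(n)=h((n+1)/2)$ if $n\equiv1\pmod 8$; $h(n)=h((n-1)/2)+1$ if $n\equiv 3\pmod 8$; $h(n)=h((n+1)/2)+1$ if $n\equiv5\pmod 8$; $h(n)=h((n-1)/2)$ if $n\equiv 7\pmod 8$.
   Context: For $k\ge0$ and $0\le m<2^k$ let $\beta_k(m)\in\{0,1\}^k$ be the point whose $j$-th coordinate is the binary digit of $m$ of weight $2^{k-j}$. For $n\ge2$ with $k=\lceil\log_2 n\rceil$, a pair $(n_0,n_1)$ of integers with $n=n_0+n_1$, $n_0\ge n_1\ge1$ is a hypercubic bipartition (HCBP) of $n$ if for some $i\in\{1,\dots,k\}$ the hyperplane $x_i=1/2$ splits the points $\beta_k(0),\dots,\beta_k(n-1)$ into $n_0$ points on one side and $n_1$ on the other. For $n\ge2$, $h(n)$ is the number of HCBPs of $n$, and $h(1)=0$. *)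

theory Defs
  imports Complex_Main
begin

definition hc_dim :: "nat \<Rightarrow> nat" where
  "hc_dim n = nat \<lceil>log 2 (real n)\<rceil>"

text \<open>beta_k(m) as a list of length k; entry j-1 is the j-th coordinate,
  the binary digit of m of weight 2^(k-j).\<close>
definition beta :: "nat \<Rightarrow> nat \<Rightarrow> nat list" where
  "beta k m = map (\<lambda>j. (m div 2 ^ (k - j)) mod 2) [1..<k+1]"

definition coord :: "nat \<Rightarrow> nat \<Rightarrow> nat \<Rightarrow> real" where
  "coord k m i = real (beta k m ! (i - 1))"

definition is_hcbp :: "nat \<Rightarrow> nat \<times> nat \<Rightarrow> bool" where
  "is_hcbp n p \<longleftrightarrow> (case p of (n0, n1) \<Rightarrow>
     n = n0 + n1 \<and> n0 \<ge> n1 \<and> n1 \<ge> 1 \<and>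
     (\<exists>i\<in>{1..hc_dim n}.
        let A = {m. m < n \<and> coord (hc_dim n) m i < 1/2};
            B = {m. m < n \<and> coord (hc_dim n) m i > 1/2}
        in (card A = n0 \<and> card B = n1) \<or> (card A = n1 \<and> card B = n0)))"

definition h :: "nat \<Rightarrow> nat" where
  "h n = (if n \<ge> 2 then card {p. is_hcbp n p} else 0)"

end

theory Submission
  imports Defs
begin


definition dd :: "nat \<Rightarrow> nat \<Rightarrow> nat" where "dd i n = min (n mod 2^i) (2^i - n mod 2^i)"
definition bt :: "nat \<Rightarrow> nat \<Rightarrow> bool" where "bt j n = odd (n div 2^j)"
definition inc :: "nat \<Rightarrow> nat \<Rightarrow> bool" where "inc n i \<longleftrightarrow> dd i n < dd (Suc i) n"
definition II where "II n = {i. 1 \<le> i \<and> inc n i}"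
definition JJ where "JJ n = {i. 1 \<le> i \<and> bt i n \<noteq> bt (i-1) n}"

lemma mod2pow: "n mod 2^(Suc i) = n mod 2^i + 2^i * (if bt i n then 1 else 0)"
proof -
  have a: "n mod (2^i*2) = 2^i * (n div 2^i mod 2) + n mod 2^i" by (rule mod_mult2_eq)
  have b: "n div 2^i mod 2 = (if bt i n then 1 else 0)" unfolding bt_def by (simp add: mod2_eq_if)
  show ?thesis unfolding power_Suc2 a b by simp
qed

lemma bt_Suc: "bt (Suc j) n = bt j (n div 2)"
  unfolding bt_def by (simp add: div_mult2_eq power_Suc mult.commute)

lemma bt0: "bt 0 n = odd n" by (simp add: bt_def)

lemma dd_mono: "dd i n \<le> dd (Suc i) n"
proof -
  have r: "n mod 2^i < 2^i" by simp
  show ?thesis unfolding dd_def mod2pow using r by (cases "bt i n") (auto simp: power_Suc)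
qed

lemma c00: "r < (P::nat) \<Longrightarrow> \<not> (min r (2*P - r) < min r (4*P - r))" unfolding min_def by (auto split: if_splits)
lemma c10: "r < (P::nat) \<Longrightarrow> (min (r+P) (2*P - (r+P)) < min (r+P) (4*P - (r+P))) \<longleftrightarrow> r \<noteq> 0" unfolding min_def by (auto split: if_splits)
lemma c01: "r < (P::nat) \<Longrightarrow> (min r (2*P - r) < min (r+2*P) (4*P - (r+2*P)))" unfolding min_def by (auto split: if_splits)
lemma c11: "r < (P::nat) \<Longrightarrow> \<not> (min (r+P) (2*P - (r+P)) < min (r+P+2*P) (4*P - (r+P+2*P)))" unfolding min_def by (auto split: if_splits)

lemma inc_char: "inc n (Suc j) \<longleftrightarrow> (bt (Suc j) n \<and> \<not> bt j n) \<or> (\<not> bt (Suc j) n \<and> bt j n \<and> n mod 2^j \<noteq> 0)"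
proof -
  define P :: nat where "P = 2^j"
  define r where "r = n mod 2^j"
  have r: "r < P" "P > 0" unfolding r_def P_def by simp_all
  have e: "inc n (Suc j) \<longleftrightarrow> min (r + P * (if bt j n then 1 else 0)) (2*P - (r + P * (if bt j n then 1 else 0)))
     < min (r + P * (if bt j n then 1 else 0) + 2*P * (if bt (Suc j) n then 1 else 0))
           (4*P - (r + P * (if bt j n then 1 else 0) + 2*P * (if bt (Suc j) n then 1 else 0)))"
    unfolding inc_def dd_def mod2pow[of n "Suc j"] mod2pow[of n j] r_def P_def by (simp add: power_Suc)
  show ?thesis
  proof (cases "bt j n"; cases "bt (Suc j) n")
    assume "bt j n" "bt (Suc j) n" thus ?thesis unfolding e r_def[symmetric] using c11[OF r(1)] by simp
  next
    assume "bt j n" "\<not> bt (Suc j) n" thus ?thesis unfolding e r_def[symmetric] using c10[OF r(1)] by simp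
  next
    assume "\<not> bt j n" "bt (Suc j) n" thus ?thesis unfolding e r_def[symmetric] using c01[OF r(1)] by simp
  next
    assume "\<not> bt j n" "\<not> bt (Suc j) n" thus ?thesis unfolding e r_def[symmetric] using c00[OF r(1)] by simp
  qed
qed

lemma dd_double: "dd (Suc i) (2*m) = 2 * dd i m"
proof -
  have "(2*m) mod 2^(Suc i) = 2 * (m mod 2^i)" by (simp add: power_Suc mod_mult_mult1)
  moreover have "m mod 2^i < 2^i" by simp
  ultimately show ?thesis unfolding dd_def by (auto simp: power_Suc min_def)
qed

lemma dd0: "dd 0 m = 0" by (simp add: dd_def)
lemma dd1: "dd 1 m = m mod 2" by (auto simp: dd_def min_def mod2_eq_if)

lemma dd_big: "n \<le> 2^i \<Longrightarrow> dd (Suc i) n = n"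
proof -
  assume a: "n \<le> 2^i"
  have p: "(0::nat) < 2^i" by simp
  have q: "(2::nat)^Suc i = 2*2^i" by simp
  have l: "n < 2^Suc i" using a p unfolding q by linarith
  hence "n mod 2^Suc i = n" by simp
  moreover have "n \<le> 2^Suc i - n" using a unfolding q by linarith
  ultimately show ?thesis unfolding dd_def by simp
qed

lemma dd_le: "2 * dd i n \<le> 2^i"
  unfolding dd_def by (auto simp: min_def)

lemma II_even: "II (2*m) = (if odd m then {1} else {}) \<union> Suc ` II m"
proof -
  have s: "inc (2*m) (Suc i) \<longleftrightarrow> inc m i" for i
    unfolding inc_def using dd_double[of i m] dd_double[of "Suc i" m] by simp
  have o: "inc (2*m) 1 \<longleftrightarrow> odd m"
    unfolding inc_def using dd_double[of 0 m] dd_double[of 1 m] dd0[of m] dd1[of m]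
    by (simp add: odd_iff_mod_2_eq_one)
  show ?thesis
  proof (rule set_eqI)
    fix x
    show "x \<in> II (2*m) \<longleftrightarrow> x \<in> (if odd m then {1} else {}) \<union> Suc ` II m"
    proof (cases x)
      case 0 then show ?thesis by (auto simp: II_def)
    next
      case (Suc i)
      show ?thesis
      proof (cases i)
        case 0 then show ?thesis using Suc o by (auto simp: II_def)
      next
        case (Suc j) then show ?thesis using \<open>x = Suc i\<close> s[of i] by (auto simp: II_def)
      qed
    qed
  qed
qed

lemma II_odd: "II (2*m+1) = Suc ` JJ m"
proof (rule set_eqI)
  fix x
  show "x \<in> II (2*m+1) \<longleftrightarrow> x \<in> Suc ` JJ m"
  proof (cases x)
    case 0 then show ?thesis by (auto simp: II_def JJ_def)
  next
    case (Suc i)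
    show ?thesis
    proof (cases i)
      case 0
      have "\<not> inc (2*m+1) 1" using inc_char[of "2*m+1" 0] bt0[of "2*m+1"] by simp
      then show ?thesis using Suc 0 by (auto simp: II_def JJ_def)
    next
      case (Suc j)
      have "(2*m+1) mod 2^Suc j \<noteq> 0"
      proof
        assume "(2*m+1) mod 2^Suc j = 0"
        hence "2^Suc j dvd 2*m+1" by (simp add: mod_eq_0_iff_dvd)
        moreover have "(2::nat) dvd 2^Suc j" by simp
        ultimately have "2 dvd 2*m+1" using dvd_trans by blast
        thus False by simp
      qed
      hence "inc (2*m+1) (Suc (Suc j)) \<longleftrightarrow> bt (Suc j) m \<noteq> bt j m"
        using inc_char[of "2*m+1" "Suc j"] bt_Suc[of "Suc j" "2*m+1"] bt_Suc[of j "2*m+1"] by auto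
      then show ?thesis using \<open>x = Suc i\<close> Suc by (auto simp: II_def JJ_def image_iff)
    qed
  qed
qed

lemma JJ_rec: "JJ n = (if odd (n div 2) \<noteq> odd n then {1} else {}) \<union> Suc ` JJ (n div 2)"
proof (rule set_eqI)
  fix x
  show "x \<in> JJ n \<longleftrightarrow> x \<in> (if odd (n div 2) \<noteq> odd n then {1} else {}) \<union> Suc ` JJ (n div 2)"
  proof (cases x)
    case 0 then show ?thesis by (auto simp: JJ_def)
  next
    case (Suc i)
    show ?thesis
    proof (cases i)
      case 0 then show ?thesis using Suc by (auto simp: JJ_def bt_Suc bt0)
    next
      case (Suc j) then show ?thesis using \<open>x = Suc i\<close> by (auto simp: JJ_def bt_Suc image_iff)
    qed
  qed
qed


lemma bt_big: "n < 2^i \<Longrightarrow> \<not> bt i n" by (simp add: bt_def)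

lemma JJ_fin: "finite (JJ n)"
proof -
  have "JJ n \<subseteq> {..Suc n}"
  proof
    fix i assume i: "i \<in> JJ n"
    show "i \<in> {..Suc n}"
    proof (rule ccontr)
      assume "i \<notin> {..Suc n}"
      hence "n < i - 1" by simp
      hence "n < 2^(i-1)" "n < 2^i" using less_exp[of "i-1"] less_exp[of i]
        by (meson less_trans order.strict_trans2 power_increasing_iff one_less_numeral_iff semiring_norm(76) less_imp_le diff_le_self)+
      thus False using i bt_big by (auto simp: JJ_def)
    qed
  qed
  thus ?thesis using finite_subset by blast
qed

lemma JJ0: "JJ 0 = {}" by (auto simp: JJ_def bt_def)

lemma II_fin: "finite (II n)"
proof (induction n rule: less_induct)
  case (less n)
  show ?case
  proof (cases "n = 0")
    case True
    then have "II n = {}" by (auto simp: II_def inc_def dd_def)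
    then show ?thesis by simp
  next
    case False
    show ?thesis
    proof (cases "even n")
      case True
      then obtain m where m: "n = 2*m" by blast
      with False have "m < n" by simp
      then show ?thesis using less m II_even[of m] by simp
    next
      case False
      then obtain m where m: "n = 2*m+1" using oddE by blast
      then show ?thesis using II_odd[of m] JJ_fin by simp
    qed
  qed
qed

lemma card_II_even: "card (II (2*m)) = card (II m) + (if odd m then 1 else 0)"
proof -
  have d: "(if odd m then {1} else {}) \<inter> Suc ` II m = {}" by (auto simp: II_def)
  show ?thesis unfolding II_even
    using card_Un_disjoint[OF _ _ d] II_fin card_image[of Suc "II m"] by simp
qed

lemma card_II_odd: "card (II (2*m+1)) = card (JJ m)"
  unfolding II_odd by (simp add: card_image)

lemma card_JJ: "card (JJ n) = card (JJ (n div 2)) + (if odd (n div 2) \<noteq> odd n then 1 else 0)"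
proof -
  have d: "(if odd (n div 2) \<noteq> odd n then {1} else {}) \<inter> Suc ` JJ (n div 2) = {}" by (auto simp: JJ_def)
  show ?thesis
    apply (subst JJ_rec)
    using card_Un_disjoint[OF _ _ d] JJ_fin card_image[of Suc "JJ (n div 2)"] by simp
qed

lemma dd_step: "dd (Suc j) (Suc n) + 2*(if bt j n then 1 else 0) = dd (Suc j) n + 1"
proof -
  define P :: nat where "P = 2^j"
  define r where "r = n mod 2^j"
  have r: "r < P" "P > 0" unfolding r_def P_def by simp_all
  have q: "(2::nat)^Suc j = 2*P" unfolding P_def by simp
  have m: "n mod (2*P) = r + P * (if bt j n then 1 else 0)" using mod2pow[of n j] r_def P_def q by simp
  have ms: "Suc n mod 2^Suc j = (if Suc (n mod 2^Suc j) = 2^Suc j then 0 else Suc (n mod 2^Suc j))"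
    by (rule mod_Suc)
  show ?thesis unfolding dd_def ms unfolding q m using r
    by (cases "bt j n") (auto simp: min_def)
qed

lemma cnt: "2 * card {m. m < n \<and> bt j m} + dd (Suc j) n = n"
proof (induction n)
  case 0 then show ?case by (simp add: dd_def)
next
  case (Suc n)
  have e: "{m. m < Suc n \<and> bt j m} = {m. m < n \<and> bt j m} \<union> (if bt j n then {n} else {})"
    by (auto simp: less_Suc_eq)
  have "card {m. m < Suc n \<and> bt j m} = card {m. m < n \<and> bt j m} + (if bt j n then 1 else 0)"
    unfolding e by (auto)
  then show ?case using Suc dd_step[of j n] by simp
qed

lemma mono_count:
  fixes f :: "nat \<Rightarrow> nat"
  assumes mono: "\<And>i. f i \<le> f (Suc i)"
  shows "card (f ` {a..a+K}) = Suc (card {i. a \<le> i \<and> i < a+K \<and> f i < f (Suc i)})"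
proof (induction K)
  case 0 then show ?case by simp
next
  case (Suc K)
  have im: "f ` {a..a+Suc K} = insert (f (Suc (a+K))) (f ` {a..a+K})"
    by (auto simp: atLeastAtMostSuc_conv)
  have st: "{i. a \<le> i \<and> i < a+Suc K \<and> f i < f (Suc i)} =
     {i. a \<le> i \<and> i < a+K \<and> f i < f (Suc i)} \<union> (if f (a+K) < f (Suc (a+K)) then {a+K} else {})"
    by (auto simp: less_Suc_eq)
  have le: "f x \<le> f (a+K)" if "x \<in> {a..a+K}" for x
    using lift_Suc_mono_le[of f, OF mono] that by simp
  show ?case
  proof (cases "f (a+K) < f (Suc (a+K))")
    case True
    hence "f (Suc (a+K)) \<notin> f ` {a..a+K}" using le by fastforce
    then show ?thesis unfolding im st using True Suc by simp
  next
    case False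
    hence "f (Suc (a+K)) = f (a+K)" using mono[of "a+K"] by simp
    hence "f (Suc (a+K)) \<in> f ` {a..a+K}" by simp
    then show ?thesis unfolding im st using False Suc by (simp add: insert_absorb)
  qed
qed


lemma hc_dim_props:
  assumes "n \<ge> 2"
  shows "hc_dim n \<ge> 1 \<and> n \<le> 2 ^ hc_dim n \<and> 2 ^ (hc_dim n - 1) < n"
proof -
  define k where "k = hc_dim n"
  have n0: "real n \<ge> 2" using assms by simp
  have lp: "log 2 (real n) > 0" using n0 by simp
  have c: "\<lceil>log 2 (real n)\<rceil> \<ge> 1" using lp zero_less_ceiling by (metis int_one_le_iff_zero_less)
  have kk: "int k = \<lceil>log 2 (real n)\<rceil>" unfolding k_def hc_dim_def using c by simp
  have k1: "k \<ge> 1" using c kk by linarith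
  have a: "real n \<le> 2 ^ k" unfolding k_def hc_dim_def
    by (rule power_of_nat_log_ge) simp
  have "int (k - 1) < \<lceil>log 2 (real n)\<rceil>" using kk k1 by linarith
  hence "real (k - 1) < log 2 (real n)" unfolding less_ceiling_iff by simp
  hence "2 powr real (k - 1) < real n" using n0 less_log_iff[of 2 "real n" "real (k-1)"] by simp
  hence "real (2 ^ (k - 1)) < real n" by (simp add: powr_realpow)
  hence b: "2 ^ (k - 1) < n" by (simp only: of_nat_less_iff)
  have "real n \<le> real (2 ^ k)" using a by simp
  hence "n \<le> 2 ^ k" by (simp only: of_nat_le_iff)
  then show ?thesis using k1 b k_def by simp
qed
lemma coord_eq: "1 \<le> i \<Longrightarrow> i \<le> k \<Longrightarrow> coord k m i = (if bt (k-i) m then 1 else 0)"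
proof -
  assume i: "1 \<le> i" "i \<le> k"
  have l: "i - 1 < length [1..<k+1]" using i by simp
  have u: "[1..<k+1] ! (i - 1) = i" using i by (simp add: nth_upt del: upt_Suc)
  have "beta k m ! (i - 1) = (m div 2 ^ (k - i)) mod 2"
    unfolding beta_def nth_map[OF l] u by simp
  thus ?thesis unfolding coord_def bt_def by (simp add: mod2_eq_if)
qed

lemma h_II:
  assumes n2: "n \<ge> 2"
  shows "h n = card (II n)"
proof -
  define k where "k = hc_dim n"
  have kp: "k \<ge> 1" "n \<le> 2^k" "2^(k-1) < n" using hc_dim_props[OF n2] k_def by auto
  define C where "C j = card {m. m < n \<and> bt j m}" for j
  have cnt': "2 * C j + dd (Suc j) n = n" for j using cnt[of n j] C_def by simp
  have ddlt: "dd (Suc j) n < n" if "j < k" for j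
  proof -
    have "2 * dd (Suc j) n \<le> 2^Suc j" by (rule dd_le)
    also have "\<dots> \<le> 2^k" using that by (intro power_increasing) auto
    also have "\<dots> = 2 * 2^(k-1)" using kp(1) by (metis Suc_diff_le diff_Suc_1 power_Suc)
    finally show ?thesis using kp(3) by linarith
  qed
  have C1: "C j \<ge> 1" if "j < k" for j using ddlt[OF that] cnt'[of j] by linarith
  have C2: "2 * C j \<le> n" for j using cnt'[of j] by linarith
  have cA: "card {m. m < n \<and> \<not> bt j m} = n - C j" for j
  proof -
    have "{m. m < n \<and> \<not> bt j m} = {..<n} - {m. m < n \<and> bt j m}" by auto
    thus ?thesis unfolding C_def by (simp add: card_Diff_subset subset_eq)
  qed
  have cmp: "{m. m < n \<and> coord k m i < 1/2} = {m. m < n \<and> \<not> bt (k-i) m}"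
            "{m. m < n \<and> coord k m i > 1/2} = {m. m < n \<and> bt (k-i) m}"
    if "i \<in> {1..k}" for i using coord_eq that by auto
  have eqc: "card {m. m < n \<and> coord k m i < 1/2} = n - C (k-i)"
              "card {m. m < n \<and> coord k m i > 1/2} = C (k-i)" if "i \<in> {1..k}" for i
    using cmp[OF that] cA[of "k-i"] C_def by simp_all
  have hc: "is_hcbp n (n0,n1) \<longleftrightarrow> n = n0+n1 \<and> n0 \<ge> n1 \<and> n1 \<ge> 1 \<and>
      (\<exists>i\<in>{1..k}. (n - C (k-i) = n0 \<and> C (k-i) = n1) \<or> (n - C (k-i) = n1 \<and> C (k-i) = n0))" for n0 n1
    unfolding is_hcbp_def Let_def k_def[symmetric] prod.case
    by (simp only: eqc cong: bex_cong)
  have S: "{p. is_hcbp n p} = (\<lambda>j. (n - C j, C j)) ` {..<k}"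
  proof (rule set_eqI)
    fix p :: "nat \<times> nat"
    obtain n0 n1 where p: "p = (n0, n1)" by fastforce
    show "p \<in> {p. is_hcbp n p} \<longleftrightarrow> p \<in> (\<lambda>j. (n - C j, C j)) ` {..<k}"
    proof
      assume "p \<in> {p. is_hcbp n p}"
      then have "is_hcbp n (n0,n1)" using p by simp
      then have "n = n0+n1 \<and> n0 \<ge> n1 \<and> n1 \<ge> 1 \<and>
         (\<exists>i\<in>{1..k}. (n - C (k-i) = n0 \<and> C (k-i) = n1) \<or> (n - C (k-i) = n1 \<and> C (k-i) = n0))"
        using hc[of n0 n1] by blast
      then have H: "n = n0 + n1" "n0 \<ge> n1" "n1 \<ge> 1" and
        "\<exists>i\<in>{1..k}. (n - C (k-i) = n0 \<and> C (k-i) = n1) \<or> (n - C (k-i) = n1 \<and> C (k-i) = n0)"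
        by blast+
      then obtain i where i: "i \<in> {1..k}" and
        o: "(n - C (k-i) = n0 \<and> C (k-i) = n1) \<or> (n - C (k-i) = n1 \<and> C (k-i) = n0)" by blast
      have "n0 = n - C (k-i) \<and> n1 = C (k-i)" using o H C2[of "k-i"] by linarith
      hence "p = (n - C (k-i), C (k-i))" using p by simp
      moreover have "k - i < k" using i by auto
      ultimately show "p \<in> (\<lambda>j. (n - C j, C j)) ` {..<k}" by blast
    next
      assume "p \<in> (\<lambda>j. (n - C j, C j)) ` {..<k}"
      then obtain j where j: "j < k" "p = (n - C j, C j)" by auto
      define i where "i = k - j"
      have i: "i \<in> {1..k}" "k - i = j" using j unfolding i_def by auto
      have n01: "n0 = n - C j" "n1 = C j" using j p by simp_all
      have "n = n0 + n1" "n0 \<ge> n1" "n1 \<ge> 1" using n01 C1[OF j(1)] C2[of j] by linarith+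
      moreover have "\<exists>i\<in>{1..k}. (n - C (k-i) = n0 \<and> C (k-i) = n1) \<or> (n - C (k-i) = n1 \<and> C (k-i) = n0)"
        using i n01 by blast
      ultimately have "is_hcbp n (n0,n1)" using hc[of n0 n1] by blast
      then show "p \<in> {p. is_hcbp n p}" using p by simp
    qed
  qed
  have "h n = card ((\<lambda>j. (n - C j, C j)) ` {..<k})" unfolding h_def S using n2 by simp
  also have "\<dots> = card (C ` {..<k})"
  proof -
    have "(\<lambda>j. (n - C j, C j)) ` {..<k} = (\<lambda>x. (n - x, x)) ` (C ` {..<k})" by auto
    moreover have "inj (\<lambda>x::nat. (n - x, x))" by (auto simp: inj_def)
    ultimately show ?thesis by (simp add: card_image inj_on_subset)
  qed
  also have "\<dots> = card ((\<lambda>j. dd (Suc j) n) ` {..<k})"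
  proof -
    have e: "(\<lambda>j. dd (Suc j) n) ` {..<k} = (\<lambda>x. n - 2*x) ` (C ` {..<k})"
    proof -
      have "dd (Suc j) n = n - 2 * C j" for j using cnt'[of j] by linarith
      thus ?thesis by (simp add: image_image)
    qed
    have "inj_on (\<lambda>x. n - 2*x) (C ` {..<k})"
    proof (rule inj_onI)
      fix x y assume "x \<in> C ` {..<k}" "y \<in> C ` {..<k}" "n - 2*x = n - 2*y"
      moreover have "2*x \<le> n" "2*y \<le> n" using calculation C2 by auto
      ultimately show "x = y" by linarith
    qed
    thus ?thesis unfolding e by (simp add: card_image)
  qed
  also have "(\<lambda>j. dd (Suc j) n) ` {..<k} = (\<lambda>i. dd i n) ` {1..k}"
  proof -
    have "(\<lambda>j. dd (Suc j) n) ` {..<k} = (\<lambda>i. dd i n) ` (Suc ` {..<k})" by (simp add: image_image)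
    thus ?thesis by (simp add: image_Suc_lessThan)
  qed
  finally have h1: "h n = card ((\<lambda>i. dd i n) ` {1..k})" .
  have big: "dd (Suc i) n = n" if "i \<ge> k" for i
  proof -
    have "(2::nat)^k \<le> 2^i" using that by (rule power_increasing) simp
    thus ?thesis using dd_big[of n i] kp(2) by linarith
  qed
  have ins: "(\<lambda>i. dd i n) ` {1..1+k} = insert n ((\<lambda>i. dd i n) ` {1..k})"
    using big[of k] by (auto simp: atLeastAtMostSuc_conv kp(1))
  have nin: "n \<notin> (\<lambda>i. dd i n) ` {1..k}"
  proof
    assume "n \<in> (\<lambda>i. dd i n) ` {1..k}"
    then obtain i where "i \<in> {1..k}" "dd i n = n" by auto
    then show False using ddlt[of "i-1"] by (cases i) auto
  qed
  have "card ((\<lambda>i. dd i n) ` {1..1+k}) = Suc (card {i. 1 \<le> i \<and> i < 1+k \<and> dd i n < dd (Suc i) n})"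
    by (rule mono_count) (rule dd_mono)
  moreover have "{i. 1 \<le> i \<and> i < 1+k \<and> dd i n < dd (Suc i) n} = II n"
  proof -
    have "\<not> dd i n < dd (Suc i) n" if "i \<ge> 1+k" for i
      using big[of i] big[of "i-1"] that by (cases i) auto
    thus ?thesis unfolding II_def inc_def by (auto simp: not_le[symmetric])
  qed
  ultimately show ?thesis using h1 ins nin finite_imageI by simp
qed

lemma IIe: "card (II (2*m)) = card (II m) + (if odd m then 1 else 0)" by (rule card_II_even)
lemma IIo: "card (II (2*m+1)) = card (JJ m)" by (rule card_II_odd)

lemma base_vals:
  "card (JJ 0) = 0" "card (JJ 1) = 1" "card (JJ 2) = 2" "card (JJ 3) = 1"
  "card (II 1) = 0" "card (II 2) = 1" "card (II 3) = 1" "card (II 4) = 1"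
  "card (II 5) = 2" "card (II 6) = 2" "card (II 7) = 1" "card (II 8) = 1"
proof -
  show j0: "card (JJ 0) = 0" by (simp add: JJ0)
  show j1: "card (JJ 1) = 1" using card_JJ[of 1] j0 by simp
  show j2: "card (JJ 2) = 2" using card_JJ[of 2] j1 by simp
  show j3: "card (JJ 3) = 1" using card_JJ[of 3] j1 by simp
  show i1: "card (II 1) = 0" using IIo[of 0] j0 by simp
  show i2: "card (II 2) = 1" using IIe[of 1] i1 by simp
  show i3: "card (II 3) = 1" using IIo[of 1] j1 by simp
  show i4: "card (II 4) = 1" using IIe[of 2] i2 by simp
  show "card (II 5) = 2" using IIo[of 2] j2 by simp
  show "card (II 6) = 2" using IIe[of 3] i3 by simp
  show "card (II 7) = 1" using IIo[of 3] j3 by simp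
  show "card (II 8) = 1" using IIe[of 4] i4 by simp
qed

lemma h_small: "h 1 = 0 \<and> h 2 = 1 \<and> h 3 = 1 \<and> h 4 = 1 \<and> h 5 = 2 \<and> h 6 = 2 \<and> h 7 = 1 \<and> h 8 = 1"
  using base_vals h_II[of 2] h_II[of 3] h_II[of 4] h_II[of 5] h_II[of 6] h_II[of 7] h_II[of 8]
  by (simp add: h_def)

lemma h_rec:
  assumes "n > 8"
  shows "(n mod 4 = 0 \<longrightarrow> h n = h (n div 2)) \<and>
       (n mod 4 = 2 \<longrightarrow> h n = h (n div 2) + 1) \<and>
       (n mod 8 = 1 \<longrightarrow> h n = h ((n + 1) div 2)) \<and>
       (n mod 8 = 3 \<longrightarrow> h n = h ((n - 1) div 2) + 1) \<and>
       (n mod 8 = 5 \<longrightarrow> h n = h ((n + 1) div 2) + 1) \<and>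
       (n mod 8 = 7 \<longrightarrow> h n = h ((n - 1) div 2))"
proof -
  define m where "m = n div 2"
  define q where "q = m div 2"
  have m2: "m \<ge> 2" using assms unfolding m_def by linarith
  have hn: "h n = card (II n)" using assms h_II by simp
  have hm: "h m = card (II m)" using m2 h_II by simp
  have hm1: "h (m+1) = card (II (m+1))" using m2 h_II by simp
  have JJm: "card (JJ m) = card (JJ q) + (if odd q \<noteq> odd m then 1 else 0)"
    using card_JJ[of m] q_def by simp
  show ?thesis
  proof (intro conjI impI)
    assume a: "n mod 4 = 0"
    hence "n = 2*m" "even m" unfolding m_def by presburger+
    thus "h n = h (n div 2)" using hn hm IIe[of m] m_def by simp
  next
    assume a: "n mod 4 = 2"
    hence "n = 2*m" "odd m" unfolding m_def by presburger+
    thus "h n = h (n div 2) + 1" using hn hm IIe[of m] m_def by simp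
  next
    assume a: "n mod 8 = 1"
    hence e: "n = 2*m+1" "even m" "even q" "m + 1 = 2*q+1" "(n+1) div 2 = m+1" unfolding m_def q_def by presburger+
    thus "h n = h ((n + 1) div 2)" using hn hm1 IIo[of m] IIo[of q] JJm by simp
  next
    assume a: "n mod 8 = 3"
    hence e: "n = 2*m+1" "odd m" "even q" "m = 2*q+1" "(n-1) div 2 = m" unfolding m_def q_def by presburger+
    thus "h n = h ((n - 1) div 2) + 1" using hn hm IIo[of m] IIo[of q] JJm by simp
  next
    assume a: "n mod 8 = 5"
    hence e: "n = 2*m+1" "even m" "odd q" "m + 1 = 2*q+1" "(n+1) div 2 = m+1" unfolding m_def q_def by presburger+
    thus "h n = h ((n + 1) div 2) + 1" using hn hm1 IIo[of m] IIo[of q] JJm by simp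
  next
    assume a: "n mod 8 = 7"
    hence e: "n = 2*m+1" "odd m" "odd q" "m = 2*q+1" "(n-1) div 2 = m" unfolding m_def q_def by presburger+
    thus "h n = h ((n - 1) div 2)" using hn hm IIo[of m] IIo[of q] JJm by simp
  qed
qed

theorem corollary21:
  shows "h 1 = 0 \<and> h 2 = 1 \<and> h 3 = 1 \<and> h 4 = 1 \<and> h 5 = 2 \<and> h 6 = 2 \<and> h 7 = 1 \<and> h 8 = 1 \<and>
    (\<forall>n::nat. n > 8 \<longrightarrow>
       (n mod 4 = 0 \<longrightarrow> h n = h (n div 2)) \<and>
       (n mod 4 = 2 \<longrightarrow> h n = h (n div 2) + 1) \<and>
       (n mod 8 = 1 \<longrightarrow> h n = h ((n + 1) div 2)) \<and>
       (n mod 8 = 3 \<longrightarrow> h n = h ((n - 1) div 2) + 1) \<and>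
       (n mod 8 = 5 \<longrightarrow> h n = h ((n + 1) div 2) + 1) \<and>
       (n mod 8 = 7 \<longrightarrow> h n = h ((n - 1) div 2)))"
  using h_small h_rec by blast

end
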